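(* Let $n$ be a power of two and let $\mathcal{C}'$ be as in the context (for any fixed $s_0,s_1,s_2$). Then there exists a code $\mathcal{C}\subseteq\mathcal{C}'$ with $|\mathcal{C}|\ge |\mathcal{C}'|/m^{10}$ such that for any $x,x'\in\mathcal{C}$, either $H_x=H_{x'}$ or $|H_x\triangle H_{x'}|\ge 10$.
   Context: Logarithms are base $2$. Set $\Delta=50+1000\log n$ and $m=1000\Delta^2$. For $x\in\{0,1\}^n$ ending in $0011$, the marker segmentation is $x=z^x_1\|\cdots\|z^x_{\ell_x}$ where each $z^x_j$ ends with $0011$ and contains exactly one occurrence of $0011$. Let $h:\{0,1\}^{\le 3\Delta}\to\{0,\dots,m-1\}$ be a fixed function such that $h(z)\ne h(z')$ whenever $z'\ne z$ is obtained from $z$ by at most two adjacent transpositions, at most two substitutions, or at most one deletion and one insertion. Define $f(x)=\sum_{j=1}^{\ell_x} j(|z^x_j|\cdot m+h(z^x_j)) \bmod (10n\Delta m+1)$, $g_1(x)=\ell_x \bmod 5$, $g_2(x)=\sum_{i=1}^n\overline{x}_i \bmod 3$ with $\overline{x}_i=\sum_{j\le i}x_j \bmod 2$, and $\mathcal{C}'=\{x\in\{0,1\}^n:(x_{n-3},\dots,x_n)=(0,0,1,1), f(x)=s_0, g_1(x)=s_1, g_2(x)=s_2, |z^x_j|\le\Delta\ \forall j\}$. The hash multiset is $H_x=\{\{h(z^x_1),\dots,h(z^x_{\ell_x})\}\}$, and for multisets $|S\triangle T|=\sum_v|\mathrm{mult}_S(v)-\mathrm{mult}_T(v)|$. *)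

theory Defs
  imports Complex_Main "HOL-Library.Multiset"
begin

text \<open>Binary strings are bool lists; True encodes 1 and False encodes 0.\<close>

definition marker :: "bool list" where
  "marker = [False, False, True, True]"

definition marker_occ :: "bool list \<Rightarrow> nat" where
  "marker_occ z = card {i. i + 4 \<le> length z \<and> take 4 (drop i z) = marker}"

definition ends_with_marker :: "bool list \<Rightarrow> bool" where
  "ends_with_marker z \<longleftrightarrow> 4 \<le> length z \<and> drop (length z - 4) z = marker"

definition segs :: "bool list \<Rightarrow> bool list list" where
  "segs x = (THE zs. concat zs = x \<and>
      (\<forall>z\<in>set zs. ends_with_marker z \<and> marker_occ z = 1))"

text \<open>Delta = 50 + 1000 log_2 n, m = 1000 Delta^2 (n a power of two, so log_2 n is an integer).\<close>
definition Delta :: "nat \<Rightarrow> nat" where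
  "Delta n = 50 + 1000 * nat \<lfloor>log 2 (real n)\<rfloor>"

definition mm :: "nat \<Rightarrow> nat" where
  "mm n = 1000 * (Delta n)\<^sup>2"

definition adj_transp :: "bool list \<Rightarrow> bool list \<Rightarrow> bool" where
  "adj_transp z z' \<longleftrightarrow> (\<exists>i. Suc i < length z \<and>
      z' = z[i := z ! Suc i, Suc i := z ! i])"

definition subst1 :: "bool list \<Rightarrow> bool list \<Rightarrow> bool" where
  "subst1 z z' \<longleftrightarrow> (\<exists>i b. i < length z \<and> z' = z[i := b])"

definition del1 :: "bool list \<Rightarrow> bool list \<Rightarrow> bool" where
  "del1 z z' \<longleftrightarrow> (\<exists>i. i < length z \<and> z' = take i z @ drop (Suc i) z)"

definition ins1 :: "bool list \<Rightarrow> bool list \<Rightarrow> bool" where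
  "ins1 z z' \<longleftrightarrow> (\<exists>i b. i \<le> length z \<and> z' = take i z @ b # drop i z)"

definition upto2 :: "('a \<Rightarrow> 'a \<Rightarrow> bool) \<Rightarrow> 'a \<Rightarrow> 'a \<Rightarrow> bool" where
  "upto2 R z z' \<longleftrightarrow> z' = z \<or> R z z' \<or> (\<exists>y. R z y \<and> R y z')"

definition upto1 :: "('a \<Rightarrow> 'a \<Rightarrow> bool) \<Rightarrow> 'a \<Rightarrow> 'a \<Rightarrow> bool" where
  "upto1 R z z' \<longleftrightarrow> z' = z \<or> R z z'"

definition confusable :: "bool list \<Rightarrow> bool list \<Rightarrow> bool" where
  "confusable z z' \<longleftrightarrow> upto2 adj_transp z z' \<or> upto2 subst1 z z' \<or>
      (\<exists>y. upto1 del1 z y \<and> upto1 ins1 y z')"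

definition good_hash :: "nat \<Rightarrow> (bool list \<Rightarrow> nat) \<Rightarrow> bool" where
  "good_hash n h \<longleftrightarrow>
     (\<forall>z. length z \<le> 3 * Delta n \<longrightarrow> h z < mm n) \<and>
     (\<forall>z z'. length z \<le> 3 * Delta n \<longrightarrow> length z' \<le> 3 * Delta n \<longrightarrow>
        z' \<noteq> z \<longrightarrow> confusable z z' \<longrightarrow> h z \<noteq> h z')"

definition fval :: "nat \<Rightarrow> (bool list \<Rightarrow> nat) \<Rightarrow> bool list \<Rightarrow> nat" where
  "fval n h x = (\<Sum>j = 1..length (segs x).
       j * (length (segs x ! (j - 1)) * mm n + h (segs x ! (j - 1))))
     mod (10 * n * Delta n * mm n + 1)"

definition g1 :: "bool list \<Rightarrow> nat" where
  "g1 x = length (segs x) mod 5"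

definition g2 :: "bool list \<Rightarrow> nat" where
  "g2 x = (\<Sum>i = 1..length x. (\<Sum>j = 1..i. of_bool (x ! (j - 1))) mod 2) mod 3"

definition Cprime :: "nat \<Rightarrow> (bool list \<Rightarrow> nat) \<Rightarrow> nat \<Rightarrow> nat \<Rightarrow> nat \<Rightarrow> bool list set" where
  "Cprime n h s0 s1 s2 = {x. length x = n \<and> 4 \<le> n \<and> drop (n - 4) x = marker \<and>
      fval n h x = s0 \<and> g1 x = s1 \<and> g2 x = s2 \<and>
      (\<forall>z\<in>set (segs x). length z \<le> Delta n)}"

definition Hms :: "(bool list \<Rightarrow> nat) \<Rightarrow> bool list \<Rightarrow> nat multiset" where
  "Hms h x = mset (map h (segs x))"

definition msdist :: "'a multiset \<Rightarrow> 'a multiset \<Rightarrow> nat" where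
  "msdist S T = (\<Sum>v\<in>set_mset S \<union> set_mset T. nat \<bar>int (count S v) - int (count T v)\<bar>)"

end

theory Submission
  imports Defs
begin

lemma greedy:
  fixes key :: "'a \<Rightarrow> 'b" and R :: "'b \<Rightarrow> 'b \<Rightarrow> bool"
  assumes "finite A" "\<And>b c. R b c \<Longrightarrow> R c b" "\<And>b. \<not> R b b"
    and "\<And>b. b \<in> key ` A \<Longrightarrow> card {c \<in> key ` A. R b c \<or> c = b} \<le> M"
  shows "\<exists>C\<subseteq>A. card A \<le> M * card C \<and> (\<forall>x\<in>C. \<forall>y\<in>C. \<not> R (key x) (key y))"
  using assms
proof (induction "card A" arbitrary: A rule: less_induct)
  case less
  show ?case
  proof (cases "A = {}")
    case True
    then show ?thesis by auto
  next
    case False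
    define F where "F b = {x\<in>A. key x = b}" for b
    have fk: "finite (key ` A)" "key ` A \<noteq> {}" using less False by auto
    define mx where "mx = Max ((\<lambda>c. card (F c)) ` key ` A)"
    have "mx \<in> (\<lambda>c. card (F c)) ` key ` A" unfolding mx_def using fk by (intro Max_in) auto
    then obtain b where b: "b \<in> key ` A" "card (F b) = mx" by blast
    have bmax: "card (F c) \<le> card (F b)" if "c \<in> key ` A" for c
      unfolding b(2) mx_def using fk that by (intro Max_ge) auto
    define N where "N = {c \<in> key ` A. R b c \<or> c = b}"
    define A' where "A' = {x\<in>A. key x \<notin> N}"
    have "A' \<subset> A" using b(1) unfolding A'_def N_def by auto
    then have lt: "card A' < card A" using less by (meson psubset_card_mono)
    have "\<exists>C\<subseteq>A'. card A' \<le> M * card C \<and> (\<forall>x\<in>C. \<forall>y\<in>C. \<not> R (key x) (key y))"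
    proof (rule less(1)[OF lt])
      show "finite A'" using less(2) unfolding A'_def by auto
      show "\<And>b c. R b c \<Longrightarrow> R c b" by (rule less(3))
      show "\<And>b. \<not> R b b" by (rule less(4))
      fix c assume c: "c \<in> key ` A'"
      have "{d \<in> key ` A'. R c d \<or> d = c} \<subseteq> {d \<in> key ` A. R c d \<or> d = c}"
        unfolding A'_def by auto
      moreover have "c \<in> key ` A" using c unfolding A'_def by auto
      ultimately show "card {d \<in> key ` A'. R c d \<or> d = c} \<le> M"
        using less(5)[of c] fk(1) card_mono[of "{d \<in> key ` A. R c d \<or> d = c}" "{d \<in> key ` A'. R c d \<or> d = c}"]
        by simp
    qed
    then obtain C' where C': "C' \<subseteq> A'" "card A' \<le> M * card C'"
      "\<forall>x\<in>C'. \<forall>y\<in>C'. \<not> R (key x) (key y)" by blast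
    define C where "C = C' \<union> F b"
    have finA: "finite A" using less by auto
    have AA: "A = A' \<union> (\<Union>c\<in>N. F c)" unfolding A'_def F_def N_def by auto
    have "card A \<le> card A' + card (\<Union>c\<in>N. F c)"
      by (subst AA) (rule card_Un_le)
    also have "card (\<Union>c\<in>N. F c) \<le> (\<Sum>c\<in>N. card (F c))"
      by (rule card_UN_le) (use fk in \<open>auto simp: N_def\<close>)
    also have "\<dots> \<le> card N * card (F b)"
      using sum_bounded_above[of N "\<lambda>c. card (F c)" "card (F b)"] bmax by (auto simp: N_def)
    also have "\<dots> \<le> M * card (F b)"
      using less(5)[OF b(1)] unfolding N_def by simp
    finally have 1: "card A \<le> M * card C' + M * card (F b)" using C'(2) by linarith
    have disj: "C' \<inter> F b = {}" using C'(1) unfolding A'_def F_def N_def by auto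
    have "finite C'" "finite (F b)" using C'(1) finA unfolding A'_def F_def
      by (auto intro: finite_subset)
    then have "card C = card C' + card (F b)" unfolding C_def using disj by (simp add: card_Un_disjoint)
    then have "card A \<le> M * card C" using 1 by (simp add: algebra_simps)
    moreover have "C \<subseteq> A" using C'(1) unfolding C_def A'_def F_def by auto
    moreover have "\<forall>x\<in>C. \<forall>y\<in>C. \<not> R (key x) (key y)"
    proof (intro ballI)
      fix x y assume x: "x \<in> C" and y: "y \<in> C"
      have nb: "\<not> R b (key z)" if "z \<in> C'" for z
        using that C'(1) unfolding A'_def N_def by auto
      show "\<not> R (key x) (key y)"
        using x y C'(3) nb less(3) less(4)[of b] unfolding C_def F_def
        apply auto using nb less(3) by blast+
    qed
    ultimately show ?thesis by blast
  qed
qed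

lemma size_as_sum:
  assumes "finite U" "set_mset M \<subseteq> U"
  shows "size M = (\<Sum>v\<in>U. count M v)"
proof -
  have "size M = (\<Sum>v\<in>set_mset M. count M v)" by (simp add: size_multiset_overloaded_eq)
  also have "\<dots> = (\<Sum>v\<in>U. count M v)"
    using assms by (intro sum.mono_neutral_left) (auto simp: count_eq_zero_iff)
  finally show ?thesis .
qed

lemma msdist_size:
  fixes S T :: "'a multiset"
  shows "msdist S T = size (S - T) + size (T - S)"
proof -
  let ?U = "set_mset S \<union> set_mset T"
  have "msdist S T = (\<Sum>v\<in>?U. count (S - T) v + count (T - S) v)"
    unfolding msdist_def by (intro sum.cong) auto
  also have "\<dots> = (\<Sum>v\<in>?U. count (S - T) v) + (\<Sum>v\<in>?U. count (T - S) v)"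
    by (simp add: sum.distrib)
  also have "\<dots> = size (S - T) + size (T - S)"
    by (subst (1 2) size_as_sum[where U = ?U]) (auto dest: in_diffD)
  finally show ?thesis .
qed

lemma msdist_sym: "msdist S T = msdist T S"
  by (simp add: msdist_size)

lemma count_image_inj:
  assumes "inj f"
  shows "count (image_mset f M) (f v) = count M v"
proof -
  have "f -` {f v} = {v}" using assms by (auto dest: injD)
  then show ?thesis by (cases "v \<in># M") (auto simp: count_image_mset not_in_iff)
qed

lemma nbr_card:
  fixes S :: "nat multiset" and m :: nat
  assumes Sb: "set_mset S \<subseteq> {..<m}" and Y: "Y \<subseteq> {T. set_mset T \<subseteq> {..<m} \<and> msdist S T \<le> 9}"
  shows "card Y \<le> (2*m+1)^9"
proof -
  define Alph :: "(nat + nat) option set" where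
    "Alph = insert None (Some ` (Inl ` {..<m} \<union> Inr ` {..<m}))"
  define enc where "enc T = image_mset (Some \<circ> Inl) (S - T) + image_mset (Some \<circ> Inr) (T - S)
      + replicate_mset (9 - msdist S T) None" for T
  define X where "X = {T. set_mset T \<subseteq> {..<m} \<and> msdist S T \<le> 9}"
  define L where "L = {xs. set xs \<subseteq> Alph \<and> length xs = 9}"
  have cA: "card Alph = 2*m+1"
  proof -
    have "card (Inl ` {..<m} \<union> Inr ` {..<(m::nat)} :: (nat+nat) set) = card (Inl ` {..<m} :: (nat+nat) set) + card (Inr ` {..<(m::nat)} :: (nat+nat) set)"
      by (rule card_Un_disjoint) auto
    also have "\<dots> = m + m" by (simp add: card_image)
    finally have "card (Some ` (Inl ` {..<m} \<union> Inr ` {..<m}) :: (nat+nat) option set) = 2*m"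
      by (subst card_image) auto
    then show ?thesis unfolding Alph_def by (subst card_insert_disjoint) auto
  qed
  have injl: "inj (Some \<circ> Inl :: nat \<Rightarrow> (nat+nat) option)" by (auto simp: inj_def)
  have injr: "inj (Some \<circ> Inr :: nat \<Rightarrow> (nat+nat) option)" by (auto simp: inj_def)
  have il: "count (image_mset (Some \<circ> Inl :: nat \<Rightarrow> (nat+nat) option) M) (Some (Inl v)) = count M v" for M :: "nat multiset" and v
    using count_image_inj[OF injl, of M v] by simp
  have ir: "count (image_mset (Some \<circ> Inr :: nat \<Rightarrow> (nat+nat) option) M) (Some (Inr v)) = count M v" for M :: "nat multiset" and v
    using count_image_inj[OF injr, of M v] by simp
  have zl: "count (image_mset (Some \<circ> Inr :: nat \<Rightarrow> (nat+nat) option) M) (Some (Inl v)) = 0" for M :: "nat multiset" and v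
    by (auto simp: count_eq_zero_iff)
  have zr: "count (image_mset (Some \<circ> Inl :: nat \<Rightarrow> (nat+nat) option) M) (Some (Inr v)) = 0" for M :: "nat multiset" and v
    by (auto simp: count_eq_zero_iff)
  have c1: "count (enc T) (Some (Inl v)) = count (S - T) v" for T v
    unfolding enc_def count_union il zl by simp
  have c2: "count (enc T) (Some (Inr v)) = count (T - S) v" for T v
    unfolding enc_def count_union ir zr by simp
  have inj: "inj_on enc X"
  proof (rule inj_onI)
    fix T1 T2 assume "T1 \<in> X" "T2 \<in> X" and e: "enc T1 = enc T2"
    show "T1 = T2"
    proof (rule multiset_eqI)
      fix v
      have "count (S - T1) v = count (S - T2) v" "count (T1 - S) v = count (T2 - S) v"
        using c1[of T1 v] c1[of T2 v] c2[of T1 v] c2[of T2 v] e by auto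
      then show "count T1 v = count T2 v" by simp
    qed
  qed
  have sub: "enc ` X \<subseteq> mset ` L"
  proof
    fix D assume "D \<in> enc ` X"
    then obtain T where T: "T \<in> X" "D = enc T" by blast
    have "size D = 9" using T unfolding enc_def X_def by (simp add: msdist_size)
    moreover have "set_mset D \<subseteq> Alph"
    proof -
      have "set_mset (S - T) \<subseteq> {..<m}" using Sb by (auto dest: in_diffD)
      moreover have "set_mset (T - S) \<subseteq> {..<m}" using T(1) unfolding X_def by (auto dest: in_diffD)
      ultimately show ?thesis unfolding T(2) enc_def Alph_def by auto
    qed
    moreover obtain xs where "mset xs = D" using ex_mset by blast
    ultimately show "D \<in> mset ` L" unfolding L_def by auto
  qed
  have finAl: "finite Alph" unfolding Alph_def by auto
  have finL: "finite L" unfolding L_def Alph_def by (intro finite_lists_length_eq) auto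
  have YX: "Y \<subseteq> X" using Y unfolding X_def .
  have "card Y \<le> card (mset ` L)"
    by (rule card_inj_on_le[OF inj_on_subset[OF inj YX]]) (use finL sub YX in auto)
  also have "\<dots> \<le> card L" using finL by (rule card_image_le)
  also have "\<dots> = (2*m+1)^9" unfolding L_def by (simp only: card_lists_length_eq[OF finAl] cA)
  finally show ?thesis .
qed

theorem lemma8:
  fixes n k s0 s1 s2 :: nat and h :: "bool list \<Rightarrow> nat"
  assumes "n = 2 ^ k"
    and "good_hash n h"
  shows "\<exists>C \<subseteq> Cprime n h s0 s1 s2.
           real (card C) \<ge> real (card (Cprime n h s0 s1 s2)) / real (mm n) ^ 10 \<and>
           (\<forall>x\<in>C. \<forall>x'\<in>C. Hms h x = Hms h x' \<or> msdist (Hms h x) (Hms h x') \<ge> 10)"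
proof -
  define A where "A = Cprime n h s0 s1 s2"
  define m where "m = mm n"
  define R where "R b c \<longleftrightarrow> b \<noteq> c \<and> msdist b c < 10" for b c :: "nat multiset"
  have m_ge: "m \<ge> 2500000" unfolding m_def mm_def Delta_def
  proof -
    have "(50::nat) \<le> 50 + 1000 * nat \<lfloor>log 2 (real n)\<rfloor>" by simp
    then have "50^2 \<le> (50 + 1000 * nat \<lfloor>log 2 (real n)\<rfloor>)^2" by (rule power_mono) simp
    then show "2500000 \<le> 1000 * (50 + 1000 * nat \<lfloor>log 2 (real n)\<rfloor>)\<^sup>2" by simp
  qed
  have finA: "finite A"
  proof -
    have "A \<subseteq> {xs. set xs \<subseteq> (UNIV::bool set) \<and> length xs = n}" unfolding A_def Cprime_def by auto
    then show ?thesis by (rule finite_subset) (intro finite_lists_length_eq, simp)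
  qed
  have bnd: "set_mset (Hms h x) \<subseteq> {..<m}" if "x \<in> A" for x
  proof
    fix v assume "v \<in># Hms h x"
    then obtain z where z: "z \<in> set (segs x)" "v = h z" unfolding Hms_def by auto
    have "length z \<le> 3 * Delta n" using z that unfolding A_def Cprime_def by fastforce
    then show "v \<in> {..<m}" using assms(2) z unfolding good_hash_def m_def by auto
  qed
  have pw: "(2*m+1)^9 \<le> m^10"
  proof -
    have "(2*m+1)^9 \<le> (3*m)^9" using m_ge by (intro power_mono) auto
    also have "\<dots> = 19683 * m^9" by (simp add: power_mult_distrib)
    also have "\<dots> \<le> m * m^9" using m_ge by (intro mult_right_mono) auto
    also have "m * m^9 = m^10" using power_add[of m 1 9] by simp
    finally show ?thesis .
  qed
  have "\<exists>C\<subseteq>A. card A \<le> m^10 * card C \<and> (\<forall>x\<in>C. \<forall>y\<in>C. \<not> R (Hms h x) (Hms h y))"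
  proof (rule greedy[OF finA])
    show "\<And>b c. R b c \<Longrightarrow> R c b" unfolding R_def using msdist_sym by metis
    show "\<And>b. \<not> R b b" unfolding R_def by simp
    fix b assume b: "b \<in> Hms h ` A"
    have "{c \<in> Hms h ` A. R b c \<or> c = b} \<subseteq> {T. set_mset T \<subseteq> {..<m} \<and> msdist b T \<le> 9}"
      using bnd unfolding R_def by (auto simp: msdist_def)
    then have "card {c \<in> Hms h ` A. R b c \<or> c = b} \<le> (2*m+1)^9"
      using b bnd by (intro nbr_card) auto
    then show "card {c \<in> Hms h ` A. R b c \<or> c = b} \<le> m^10" using pw by linarith
  qed
  then obtain C where C: "C \<subseteq> A" "card A \<le> m^10 * card C"
    "\<forall>x\<in>C. \<forall>y\<in>C. \<not> R (Hms h x) (Hms h y)" by blast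
  have mpos: "real m ^ 10 > 0" using m_ge by simp
  have "real (card A) \<le> real m ^ 10 * real (card C)"
    using C(2) by (metis of_nat_le_iff of_nat_mult of_nat_power)
  then have "real (card A) / real m ^ 10 \<le> real (card C)"
    using mpos by (simp add: divide_le_eq mult.commute)
  moreover have "\<forall>x\<in>C. \<forall>x'\<in>C. Hms h x = Hms h x' \<or> msdist (Hms h x) (Hms h x') \<ge> 10"
    using C(3) unfolding R_def by force
  ultimately show ?thesis using C(1) unfolding A_def m_def by blast
qed

end
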